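(* Let $N\ge 1$ and $1\le K\le N$ be integers and $\lambda_s,\lambda_d,c>0$. Let $T_1,\dots,T_N$ be i.i.d. with CDF $1-e^{-\lambda_s(t-c)}$ for $t>c$, let $T_{\mathrm D}$ be independent of them with density $\lambda_d e^{-\lambda_d(t-c)}$ for $t>c$, let $T_N(h)$ denote the $h$-th smallest of $T_1,\dots,T_N$, and fix $n\in\{1,\dots,N\}$. Let $$\mathcal C_{\mathrm S,2}=\{T_{\mathrm D}<T_N(K)\}\cap\{T_n\le\min\{T_{\mathrm D},T_N(K)\}\},$$ assumed to have positive probability. For $1\le h\le N$ and $0\le j\le h-1$ put $B_{h,j}=h\binom{N}{h}\binom{h-1}{j}(-1)^j$, $U_{h,j}=N-h+1+j$, $H_{h,j}=\lambda_sU_{h,j}+\lambda_d$, and $\mathcal R_h=\sum_{j=0}^{h-1}B_{h,j}\big(\frac{1}{U_{h,j}}-\frac{\lambda_s}{H_{h,j}}\big)$. Then $$\mathbb E[T_{\mathrm D}\mid\mathcal C_{\mathrm S,2}]=\frac{1}{K\mathcal R_K-\sum_{h=1}^K\mathcal R_h}\Big(K\sum_{j=0}^{K-1}B_{K,j}\lambda_d\frac{cH_{K,j}+1}{U_{K,j}H_{K,j}^2}-\sum_{h=1}^{K}\sum_{j=0}^{h-1}B_{h,j}\lambda_d\frac{cH_{h,j}+1}{U_{h,j}H_{h,j}^2}\Big),$$ $$\mathbb E[T_{\mathrm D}^2\mid\mathcal C_{\mathrm S,2}]=\frac{1}{K\mathcal R_K-\sum_{h=1}^K\mathcal R_h}\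Big(K\sum_{j=0}^{K-1}B_{K,j}\lambda_d\frac{c^2H_{K,j}^2+2cH_{K,j}+2}{U_{K,j}H_{K,j}^3}-\sum_{h=1}^{K}\sum_{j=0}^{h-1}B_{h,j}\lambda_d\frac{c^2H_{h,j}^2+2cH_{h,j}+2}{U_{h,j}H_{h,j}^3}\Big).$$
   Context: Model: an access point multicasts a status update with a random (shifted exponential) deadline $T_{\mathrm D}$ to $N$ devices with i.i.d. shifted-exponential delivery times; transmission terminates at $\min\{T_{\mathrm D},T_N(K)\}$. $\mathcal C_{\mathrm S,2}$ is the event that device $n$ receives the update and the transmission stops because the deadline expired before $K$ devices received it. *)

theory Defs
  imports "HOL-Probability.Probability"
begin

definition order_stat :: "nat \<Rightarrow> (nat \<Rightarrow> 'a \<Rightarrow> real) \<Rightarrow> nat \<Rightarrow> 'a \<Rightarrow> real" where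
  "order_stat N T h x = sort (map (\<lambda>i. T i x) [1..<N+1]) ! (h - 1)"

definition cond_exp_event :: "'a measure \<Rightarrow> ('a \<Rightarrow> real) \<Rightarrow> 'a set \<Rightarrow> real" where
  "cond_exp_event M X C = (\<integral>x. indicator C x * X x \<partial>M) / measure M C"

definition Bc :: "nat \<Rightarrow> nat \<Rightarrow> nat \<Rightarrow> real" where
  "Bc N h j = real h * real (N choose h) * real ((h - 1) choose j) * (-1) ^ j"

definition Uc :: "nat \<Rightarrow> nat \<Rightarrow> nat \<Rightarrow> real" where
  "Uc N h j = real N - real h + 1 + real j"

definition Hc :: "real \<Rightarrow> real \<Rightarrow> nat \<Rightarrow> nat \<Rightarrow> nat \<Rightarrow> real" where
  "Hc ls ld N h j = ls * Uc N h j + ld"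

definition Rc :: "real \<Rightarrow> real \<Rightarrow> nat \<Rightarrow> nat \<Rightarrow> real" where
  "Rc ls ld N h = (\<Sum>j<h. Bc N h j * (1 / Uc N h j - ls / Hc ls ld N h j))"

end

theory Submission
  imports Defs "HOL-Real_Asymp.Real_Asymp"
begin

lemma sorted_filter_count:
  fixes ys :: "real list"
  assumes s: "sorted ys" and K: "1 \<le> K" "K \<le> length ys"
  shows "t < ys ! (K-1) \<longleftrightarrow> length (filter (\<lambda>y. y \<le> t) ys) < K"
proof
  assume lt: "t < ys ! (K-1)"
  have "{i. i < length ys \<and> ys!i \<le> t} \<subseteq> {..<K-1}"
  proof
    fix i assume i: "i \<in> {i. i < length ys \<and> ys!i \<le> t}"
    show "i \<in> {..<K-1}"
    proof (rule ccontr)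
      assume "i \<notin> {..<K-1}"
      then have "ys!(K-1) \<le> ys!i" using i s by (intro sorted_nth_mono) auto
      then show False using i lt by auto
    qed
  qed
  then have "card {i. i < length ys \<and> ys!i \<le> t} \<le> K - 1"
    by (metis card_lessThan card_mono finite_lessThan)
  then show "length (filter (\<lambda>y. y \<le> t) ys) < K"
    using K by (simp add: length_filter_conv_card)
next
  assume c: "length (filter (\<lambda>y. y \<le> t) ys) < K"
  show "t < ys ! (K-1)"
  proof (rule ccontr)
    assume "\<not> t < ys ! (K-1)"
    then have le: "ys!(K-1) \<le> t" by simp
    have "{..<K} \<subseteq> {i. i < length ys \<and> ys!i \<le> t}"
    proof
      fix i assume "i \<in> {..<K}"
      then show "i \<in> {i. i < length ys \<and> ys!i \<le> t}"
        using K le sorted_nth_mono[OF s, of i "K-1"] by fastforce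
    qed
    then have "K \<le> card {i. i < length ys \<and> ys!i \<le> t}"
      by (metis card_lessThan card_mono finite_Collect_conjI finite_Collect_less_nat)
    then show False using c by (simp add: length_filter_conv_card)
  qed
qed

lemma order_stat_gt:
  assumes "1 \<le> K" "K \<le> N"
  shows "t < order_stat N T K x \<longleftrightarrow> card {i\<in>{1..N}. T i x \<le> t} < K"
proof -
  let ?xs = "map (\<lambda>i. T i x) [1..<N+1]"
  have "t < order_stat N T K x \<longleftrightarrow> length (filter (\<lambda>y. y \<le> t) (sort ?xs)) < K"
    unfolding order_stat_def using assms by (intro sorted_filter_count) auto
  also have "length (filter (\<lambda>y. y \<le> t) (sort ?xs)) = length (filter (\<lambda>y. y \<le> t) ?xs)"
    by (metis mset_filter mset_sort size_mset)
  also have "\<dots> = length (filter (\<lambda>i. T i x \<le> t) [1..<N+1])"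
    by (simp add: filter_map comp_def)
  also have "\<dots> = card {i\<in>{1..N}. T i x \<le> t}"
    by (subst distinct_length_filter) (auto intro!: arg_cong[where f=card])
  finally show ?thesis .
qed

definition bterm :: "nat \<Rightarrow> nat \<Rightarrow> real \<Rightarrow> real" where
  "bterm N m u = real (N choose m) * (1-u)^m * u^(N-m)"
definition Gm :: "nat \<Rightarrow> nat \<Rightarrow> real \<Rightarrow> real" where
  "Gm N h u = (\<Sum>m<h. bterm N m u)"
definition Gc :: "nat \<Rightarrow> nat \<Rightarrow> real \<Rightarrow> real" where
  "Gc N h u = (\<Sum>j<h. Bc N h j * u^(N-h+1+j) / Uc N h j)"
definition Pp :: "nat \<Rightarrow> nat \<Rightarrow> real \<Rightarrow> real" where
  "Pp N K u = (\<Sum>m<K-1. real ((N-1) choose m) * (1-u)^(m+1) * u^(N-1-m))"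

lemma binom_id1: "real (N - h) * real (N choose h) = real (Suc h) * real (N choose Suc h)"
proof -
  have "(N - h) * (N choose h) = N * ((N - 1) choose h)" by (rule binomial_absorb_comp)
  also have "\<dots> = Suc h * (N choose Suc h)" using times_binomial_minus1_eq[of "Suc h" N] by simp
  finally show ?thesis by (metis of_nat_mult)
qed

lemma Gm_deriv:
  assumes "h \<le> N"
  shows "(Gm N h has_real_derivative real h * real (N choose h) * u^(N-h) * (1-u)^(h-1)) (at u)"
  using assms
proof (induction h)
  case 0
  then show ?case by (simp add: Gm_def)
next
  case (Suc h)
  have e: "Gm N (Suc h) = (\<lambda>u. Gm N h u + bterm N h u)"
    by (auto simp: Gm_def)
  have d: "(bterm N h has_real_derivative
      real (N choose h) * (real h * (1-u)^(h-1) * (-1) * u^(N-h) + (1-u)^h * (real (N-h) * u^(N-h-1)))) (at u)"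
    unfolding bterm_def
    by (auto intro!: derivative_eq_intros simp: algebra_simps)
  have "(Gm N (Suc h) has_real_derivative
      real h * real (N choose h) * u^(N-h) * (1-u)^(h-1) +
      real (N choose h) * (real h * (1-u)^(h-1) * (-1) * u^(N-h) + (1-u)^h * (real (N-h) * u^(N-h-1)))) (at u)"
    unfolding e using Suc by (intro DERIV_add d) auto
  moreover have "real h * real (N choose h) * u^(N-h) * (1-u)^(h-1) +
      real (N choose h) * (real h * (1-u)^(h-1) * (-1) * u^(N-h) + (1-u)^h * (real (N-h) * u^(N-h-1)))
      = real (Suc h) * real (N choose Suc h) * u^(N - Suc h) * (1-u)^(Suc h - 1)"
  proof -
    have "real h * real (N choose h) * u^(N-h) * (1-u)^(h-1) +
      real (N choose h) * (real h * (1-u)^(h-1) * (-1) * u^(N-h) + (1-u)^h * (real (N-h) * u^(N-h-1)))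
      = (real (N-h) * real (N choose h)) * u^(N - Suc h) * (1-u)^h"
      by (simp add: algebra_simps)
    also have "\<dots> = real (Suc h) * real (N choose Suc h) * u^(N - Suc h) * (1-u)^(Suc h - 1)"
      by (simp add: binom_id1)
    finally show ?thesis .
  qed
  ultimately show ?case by simp
qed

lemma Gc_deriv:
  assumes "1 \<le> h" "h \<le> N"
  shows "(Gc N h has_real_derivative real h * real (N choose h) * u^(N-h) * (1-u)^(h-1)) (at u)"
proof -
  have U: "Uc N h j = real (N-h+1+j)" for j using assms by (simp add: Uc_def)
  have "(Gc N h has_real_derivative (\<Sum>j<h. Bc N h j * u^(N-h+j))) (at u)"
    unfolding Gc_def[abs_def]
  proof (intro DERIV_sum)
    fix j assume "j \<in> {..<h}"
    have "((\<lambda>u. Bc N h j * u^(N-h+1+j) / Uc N h j) has_real_derivative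
           Bc N h j * (real (N-h+1+j) * u^(N-h+1+j - Suc 0)) / Uc N h j) (at u)"
      by (intro DERIV_cdivide DERIV_cmult DERIV_pow)
    moreover have "Bc N h j * (real (N-h+1+j) * u^(N-h+1+j - Suc 0)) / Uc N h j = Bc N h j * u^(N-h+j)"
    proof -
      define e where "e = N-h+1+j"
      have r: "real e \<noteq> 0" unfolding e_def by simp
      have "Bc N h j * (real e * u^(e - Suc 0)) / real e = Bc N h j * u^(e - Suc 0)" using r by simp
      moreover have "e - Suc 0 = N-h+j" unfolding e_def by simp
      ultimately show ?thesis unfolding U e_def by simp
    qed
    ultimately show "((\<lambda>u. Bc N h j * u^(N-h+1+j) / Uc N h j) has_real_derivative Bc N h j * u^(N-h+j)) (at u)"
      by simp
  qed
  moreover have "(\<Sum>j<h. Bc N h j * u^(N-h+j)) = real h * real (N choose h) * u^(N-h) * (1-u)^(h-1)"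
  proof -
    have "(1-u)^(h-1) = (-u + 1)^(h-1)" by simp
    also have "\<dots> = (\<Sum>j\<le>h-1. real ((h-1) choose j) * (-u)^j * 1^(h-1-j))"
      by (rule binomial_ring)
    also have "\<dots> = (\<Sum>j<h. real ((h-1) choose j) * (-1)^j * u^j)"
      using assms by (intro sum.cong) (auto simp: power_minus')
    finally have "(1-u)^(h-1) = (\<Sum>j<h. real ((h-1) choose j) * (-1)^j * u^j)" .
    then show ?thesis
      by (simp add: sum_distrib_left Bc_def power_add algebra_simps)
  qed
  ultimately show ?thesis by simp
qed

lemma Gc_eq_Gm:
  assumes "1 \<le> h" "h \<le> N"
  shows "Gc N h u = Gm N h u"
proof -
  have "\<forall>x. ((\<lambda>u. Gc N h u - Gm N h u) has_real_derivative 0) (at x)"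
  proof
    fix x
    show "((\<lambda>u. Gc N h u - Gm N h u) has_real_derivative 0) (at x)"
      using DERIV_diff[OF Gc_deriv[OF assms, of x] Gm_deriv[OF assms(2), of x]] by simp
  qed
  then have "Gc N h u - Gm N h u = Gc N h 0 - Gm N h 0"
    by (rule DERIV_isconst_all)
  moreover have "Gc N h 0 = 0" unfolding Gc_def by simp
  moreover have "Gm N h 0 = 0" unfolding Gm_def bterm_def using assms by (intro sum.neutral) auto
  ultimately show ?thesis by simp
qed

lemma Pp_eq_aux:
  assumes "1 \<le> N"
  shows "K < N \<Longrightarrow> real N * Pp N (Suc K) u = real (Suc K) * Gm N (Suc K) u - (\<Sum>h\<in>{1..Suc K}. Gm N h u)"
proof (induction K)
  case 0
  then show ?case by (simp add: Pp_def)
next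
  case (Suc K)
  have IH: "real N * Pp N (Suc K) u = real (Suc K) * Gm N (Suc K) u - (\<Sum>h\<in>{1..Suc K}. Gm N h u)"
    using Suc by simp
  have P: "Pp N (Suc (Suc K)) u = Pp N (Suc K) u + real ((N-1) choose K) * (1-u)^(K+1) * u^(N-1-K)"
    by (simp add: Pp_def)
  have G: "Gm N (Suc (Suc K)) u = Gm N (Suc K) u + bterm N (Suc K) u"
    by (simp add: Gm_def)
  have S: "(\<Sum>h\<in>{1..Suc (Suc K)}. Gm N h u) = (\<Sum>h\<in>{1..Suc K}. Gm N h u) + Gm N (Suc (Suc K)) u"
    by simp
  have B: "real N * real ((N-1) choose K) = real (Suc K) * real (N choose Suc K)"
    using times_binomial_minus1_eq[of "Suc K" N] by (metis diff_Suc_1 of_nat_mult zero_less_Suc)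
  have "real N * (real ((N-1) choose K) * (1-u)^(K+1) * u^(N-1-K))
     = (real N * real ((N-1) choose K)) * ((1-u)^(K+1) * u^(N-1-K))" by (simp add: mult_ac)
  also have "\<dots> = real (Suc K) * real (N choose Suc K) * ((1-u)^(K+1) * u^(N-1-K))" by (simp only: B)
  also have "\<dots> = real (Suc K) * bterm N (Suc K) u"
    by (simp add: bterm_def mult_ac)
  finally have E: "real N * (real ((N-1) choose K) * (1-u)^(K+1) * u^(N-1-K)) = real (Suc K) * bterm N (Suc K) u" .
  then show ?case
    unfolding P G S using IH E by (simp add: algebra_simps)
qed

lemma Pp_eq:
  assumes "1 \<le> K" "K \<le> N"
  shows "real N * Pp N K u = real K * Gm N K u - (\<Sum>h\<in>{1..K}. Gm N h u)"
  using Pp_eq_aux[of N "K-1" u] assms by simp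

lemma ftc_to_inf:
  fixes f F :: "real \<Rightarrow> real"
  assumes der: "\<And>t. (F has_real_derivative f t) (at t)"
    and cont: "continuous_on UNIV f"
    and lim: "(F \<longlongrightarrow> 0) at_top"
    and nonneg: "\<And>t. t \<ge> c \<Longrightarrow> f t \<ge> 0"
  shows "(f has_integral (- F c)) {c..}"
proof (rule has_integral_to_inf)
  show "f integrable_on {c..y}" for y
    by (rule integrable_continuous_interval) (rule continuous_on_subset[OF cont], auto)
  have "\<forall>\<^sub>F y in at_top. integral {c..y} f = F y - F c"
  proof (rule eventually_at_top_linorderI[of c])
    fix y assume "c \<le> y"
    then have "(f has_integral (F y - F c)) {c..y}"
      by (intro fundamental_theorem_of_calculus)
         (auto intro: has_field_derivative_at_within[OF der]
               simp flip: has_real_derivative_iff_has_vector_derivative)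
    then show "integral {c..y} f = F y - F c" by blast
  qed
  moreover have "((\<lambda>y. F y - F c) \<longlongrightarrow> 0 - F c) at_top"
    by (intro tendsto_intros lim)
  ultimately show "((\<lambda>y. integral {c..y} f) \<longlongrightarrow> - F c) at_top"
    by (simp add: filterlim_cong tendsto_cong)
qed (use nonneg in auto)

lemma moment0:
  fixes a c :: real
  assumes a: "a > 0"
  shows "((\<lambda>t. t^0 * exp (-a*(t-c))) has_integral (1/a)) {c..}"
proof -
  have "((\<lambda>t. exp (-a*(t-c))) has_integral (- (- exp (-a*(c-c))/a))) {c..}"
  proof (rule ftc_to_inf[where F="\<lambda>t. - exp (-a*(t-c))/a"])
    show "((\<lambda>t. - exp (-a*(t-c))/a) has_real_derivative exp (-a*(t-c))) (at t)" for t
      using a by (auto intro!: derivative_eq_intros)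
    show "((\<lambda>t. - exp (-a*(t-c))/a) \<longlongrightarrow> 0) at_top" using a by real_asymp
  qed (auto intro!: continuous_intros)
  then show ?thesis by simp
qed

lemma moment1:
  fixes a c :: real
  assumes a: "a > 0" and c: "c \<ge> 0"
  shows "((\<lambda>t. t^1 * exp (-a*(t-c))) has_integral ((c*a+1)/a^2)) {c..}"
proof -
  let ?F = "\<lambda>t. - (t/a + 1/a^2) * exp (-a*(t-c))"
  have "((\<lambda>t. t * exp (-a*(t-c))) has_integral (- ?F c)) {c..}"
  proof (rule ftc_to_inf[where F="?F"])
    show "(?F has_real_derivative t * exp (-a*(t-c))) (at t)" for t
      using a by (auto intro!: derivative_eq_intros simp: field_simps power2_eq_square)
    show "(?F \<longlongrightarrow> 0) at_top" using a by real_asymp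
  qed (use c in \<open>auto intro!: continuous_intros\<close>)
  moreover have "- ?F c = (c*a+1)/a^2" using a by (simp add: field_simps power2_eq_square)
  ultimately show ?thesis by simp
qed

lemma moment2:
  fixes a c :: real
  assumes a: "a > 0"
  shows "((\<lambda>t. t^2 * exp (-a*(t-c))) has_integral ((c^2*a^2+2*c*a+2)/a^3)) {c..}"
proof -
  let ?F = "\<lambda>t. - (t^2/a + 2*t/a^2 + 2/a^3) * exp (-a*(t-c))"
  have "((\<lambda>t. t^2 * exp (-a*(t-c))) has_integral (- ?F c)) {c..}"
  proof (rule ftc_to_inf[where F="?F"])
    show "(?F has_real_derivative t^2 * exp (-a*(t-c))) (at t)" for t
      using a by (auto intro!: derivative_eq_intros simp: field_simps power2_eq_square power3_eq_cube)
    show "(?F \<longlongrightarrow> 0) at_top" using a by real_asymp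
  qed (auto intro!: continuous_intros)
  moreover have "- ?F c = (c^2*a^2+2*c*a+2)/a^3" using a by (simp add: field_simps power2_eq_square power3_eq_cube)
  ultimately show ?thesis by simp
qed

lemma subset_sum:
  fixes a b :: real
  assumes fin: "finite I" and n: "n \<in> I"
  shows "(\<Sum>S\<in>{S. S \<subseteq> I \<and> n \<in> S \<and> card S < K}. a^card S * b^(card I - card S))
       = (\<Sum>m<K-1. real ((card I - 1) choose m) * a^(m+1) * b^(card I - 1 - m))"
proof -
  let ?I' = "I - {n}"
  let ?X = "\<lambda>m. {S'. S' \<subseteq> ?I' \<and> card S' = m}"
  have fin': "finite ?I'" using fin by simp
  have cI': "card ?I' = card I - 1" using fin n by simp
  have img: "{S. S \<subseteq> I \<and> n \<in> S \<and> card S < K} = insert n ` (\<Union>m\<in>{..<K-1}. ?X m)"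
  proof (intro equalityI subsetI)
    fix S assume S: "S \<in> {S. S \<subseteq> I \<and> n \<in> S \<and> card S < K}"
    then have "finite S" using fin finite_subset by blast
    then have "card (S - {n}) = card S - 1" using S by simp
    moreover have "S = insert n (S - {n})" using S by auto
    moreover have "card S \<ge> 1" using \<open>finite S\<close> S card_gt_0_iff[of S] by auto
    ultimately show "S \<in> insert n ` (\<Union>m\<in>{..<K-1}. ?X m)" using S
      by (intro image_eqI[of _ _ "S - {n}"]) auto
  next
    fix S assume "S \<in> insert n ` (\<Union>m\<in>{..<K-1}. ?X m)"
    then obtain S' where S': "S' \<subseteq> ?I'" "card S' < K - 1" "S = insert n S'" by auto
    have "finite S'" using S' fin' finite_subset by blast
    moreover have "n \<notin> S'" using S' by auto
    ultimately have "card S = Suc (card S')" using S' by simp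
    then show "S \<in> {S. S \<subseteq> I \<and> n \<in> S \<and> card S < K}" using S' n by auto
  qed
  have inj: "inj_on (insert n) (\<Union>m\<in>{..<K-1}. ?X m)"
  proof (rule inj_onI)
    fix A B assume A: "A \<in> (\<Union>m\<in>{..<K-1}. ?X m)" and B: "B \<in> (\<Union>m\<in>{..<K-1}. ?X m)"
      and e: "insert n A = insert n B"
    have "n \<notin> A" "n \<notin> B" using A B by auto
    then show "A = B" using e by (metis Diff_insert_absorb)
  qed
  have cardins: "card (insert n S') = Suc (card S')" if "S' \<in> (\<Union>m\<in>{..<K-1}. ?X m)" for S'
  proof -
    have "finite S'" using that fin' finite_subset by blast
    moreover have "n \<notin> S'" using that by auto
    ultimately show ?thesis by simp
  qed
  have "(\<Sum>S\<in>{S. S \<subseteq> I \<and> n \<in> S \<and> card S < K}. a^card S * b^(card I - card S))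
      = (\<Sum>S'\<in>(\<Union>m\<in>{..<K-1}. ?X m). a^card (insert n S') * b^(card I - card (insert n S')))"
    unfolding img by (rule sum.reindex[OF inj, unfolded comp_def])
  also have "\<dots> = (\<Sum>S'\<in>(\<Union>m\<in>{..<K-1}. ?X m). a^(Suc (card S')) * b^(card I - 1 - card S'))"
    by (intro sum.cong refl) (simp add: cardins)
  also have "\<dots> = (\<Sum>m<K-1. \<Sum>S'\<in>?X m. a^(Suc (card S')) * b^(card I - 1 - card S'))"
  proof (rule sum.UNION_disjoint)
    show "\<forall>i\<in>{..<K-1}. finite (?X i)"
      using fin' by (auto intro: finite_subset[of _ "Pow ?I'"])
  qed auto
  also have "\<dots> = (\<Sum>m<K-1. \<Sum>S'\<in>?X m. a^(Suc m) * b^(card I - 1 - m))"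
    by (intro sum.cong refl) auto
  also have "\<dots> = (\<Sum>m<K-1. real (card (?X m)) * (a^(Suc m) * b^(card I - 1 - m)))"
    by simp
  also have "\<dots> = (\<Sum>m<K-1. real ((card I - 1) choose m) * a^(m+1) * b^(card I - 1 - m))"
    using n_subsets[OF fin', unfolded cI'] by (simp add: mult_ac)
  finally show ?thesis .
qed

lemma prob_count:
  fixes T :: "'i \<Rightarrow> 'a \<Rightarrow> real" and t Ft :: real
  assumes P: "prob_space M" and fin: "finite I" and n: "n \<in> I"
    and ind: "prob_space.indep_vars M (\<lambda>_. borel) T I"
    and F: "\<And>i. i \<in> I \<Longrightarrow> measure M {x\<in>space M. T i x \<le> t} = Ft"
  shows "measure M {x\<in>space M. T n x \<le> t \<and> card {i\<in>I. T i x \<le> t} < K}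
       = (\<Sum>m<K-1. real ((card I - 1) choose m) * Ft^(m+1) * (1-Ft)^(card I - 1 - m))"
proof -
  interpret prob_space M by fact
  have rv: "\<And>i. i \<in> I \<Longrightarrow> T i \<in> borel_measurable M"
    using ind unfolding prob_space.indep_vars_def[OF P] by blast
  let ?S = "{S. S \<subseteq> I \<and> n \<in> S \<and> card S < K}"
  let ?E = "\<lambda>S. {x\<in>space M. {i\<in>I. T i x \<le> t} = S}"
  let ?A = "\<lambda>S i. if i \<in> S then {..t} else {t<..}"
  have finS: "finite ?S"
  proof (rule finite_subset)
    show "?S \<subseteq> Pow I" by auto
  qed (use fin in simp)
  have EI: "?E S = (\<Inter>i\<in>I. T i -` ?A S i \<inter> space M)" if "S \<subseteq> I" for S
  proof (rule set_eqI)
    fix x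
    have "x \<in> ?E S \<longleftrightarrow> x \<in> space M \<and> (\<forall>i\<in>I. (T i x \<le> t) = (i \<in> S))"
      using that by blast
    also have "\<dots> \<longleftrightarrow> x \<in> space M \<and> (\<forall>i\<in>I. T i x \<in> ?A S i)"
    proof -
      have "(T i x \<le> t) = (i \<in> S) \<longleftrightarrow> T i x \<in> ?A S i" for i
        by (cases "i \<in> S") (auto simp: not_le)
      then show ?thesis by simp
    qed
    also have "\<dots> \<longleftrightarrow> x \<in> (\<Inter>i\<in>I. T i -` ?A S i \<inter> space M)"
      using n by blast
    finally show "x \<in> ?E S \<longleftrightarrow> x \<in> (\<Inter>i\<in>I. T i -` ?A S i \<inter> space M)" .
  qed
  have Emeas: "?E S \<in> sets M" if "S \<subseteq> I" for S
    unfolding EI[OF that] using rv n by (intro sets.finite_INT fin) (auto split: if_splits)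
  have probE: "prob (?E S) = Ft^card S * (1-Ft)^(card I - card S)" if S: "S \<subseteq> I" for S
  proof -
    have "prob (?E S) = (\<Prod>i\<in>I. prob (T i -` ?A S i \<inter> space M))"
      unfolding EI[OF S] using n by (intro indep_varsD[OF ind] fin) auto
    also have "\<dots> = (\<Prod>i\<in>I. if i \<in> S then Ft else 1 - Ft)"
    proof (intro prod.cong refl)
      fix i assume i: "i \<in> I"
      have e1: "T i -` {..t} \<inter> space M = {x\<in>space M. T i x \<le> t}" by auto
      have e2: "T i -` {t<..} \<inter> space M = space M - {x\<in>space M. T i x \<le> t}" by auto
      have m: "{x\<in>space M. T i x \<le> t} \<in> events" using rv[OF i] by measurable
      show "prob (T i -` ?A S i \<inter> space M) = (if i \<in> S then Ft else 1 - Ft)"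
        using F[OF i] prob_compl[OF m] by (simp add: e1 e2)
    qed
    also have "\<dots> = Ft^card S * (1-Ft)^(card I - card S)"
    proof -
      have "I \<inter> {i. i \<in> S} = S" "I \<inter> - {i. i \<in> S} = I - S" using S by auto
      moreover have "card (I - S) = card I - card S" using S fin by (simp add: card_Diff_subset finite_subset)
      ultimately show ?thesis by (simp add: prod.If_cases[OF fin])
    qed
    finally show ?thesis .
  qed
  have "{x\<in>space M. T n x \<le> t \<and> card {i\<in>I. T i x \<le> t} < K} = (\<Union>S\<in>?S. ?E S)"
    using n by auto
  then have "measure M {x\<in>space M. T n x \<le> t \<and> card {i\<in>I. T i x \<le> t} < K} = measure M (\<Union>S\<in>?S. ?E S)"
    by simp
  also have "\<dots> = (\<Sum>S\<in>?S. prob (?E S))"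
    by (rule finite_measure_finite_Union[OF finS]) (auto simp: disjoint_family_on_def intro: Emeas)
  also have "\<dots> = (\<Sum>S\<in>?S. Ft^card S * (1-Ft)^(card I - card S))"
    by (intro sum.cong refl probE) auto
  also have "\<dots> = (\<Sum>m<K-1. real ((card I - 1) choose m) * Ft^(m+1) * (1-Ft)^(card I - 1 - m))"
    by (rule subset_sum[OF fin n])
  finally show ?thesis .
qed

lemma card_sum_real: "finite I \<Longrightarrow> real (card {i\<in>I. P i}) = (\<Sum>i\<in>I. if P i then 1 else 0)"
  by (simp add: sum.If_cases Int_def conj_commute)

lemma fubini_part:
  fixes M :: "'a measure" and T :: "nat \<Rightarrow> 'a \<Rightarrow> real" and TD :: "'a \<Rightarrow> real"
    and N K n k :: nat and f :: "real \<Rightarrow> ennreal" and p :: "real \<Rightarrow> real"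
  assumes P: "prob_space M"
    and ind: "prob_space.indep_vars M (\<lambda>_. borel) (\<lambda>i. if i = 0 then TD else T i) {0..N}"
    and D: "distributed M lborel TD f"
    and n: "n \<in> {1..N}"
    and pm[measurable]: "p \<in> borel_measurable borel"
    and p: "\<And>t. p t = measure M {x\<in>space M. T n x \<le> t \<and> card {i\<in>{1..N}. T i x \<le> t} < K}"
  defines "C' \<equiv> {x\<in>space M. T n x \<le> TD x \<and> card {i\<in>{1..N}. T i x \<le> TD x} < K}"
  shows "C' \<in> sets M"
    and "(\<integral>\<^sup>+x. ennreal (indicator C' x * TD x ^ k) \<partial>M) = (\<integral>\<^sup>+t. f t * ennreal (t ^ k * p t) \<partial>lborel)"
proof -
  interpret prob_space M by fact
  let ?I = "{1..N}"
  let ?PI = "PiM ?I (\<lambda>_. borel) :: (nat \<Rightarrow> real) measure"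
  let ?P0 = "PiM {0} (\<lambda>_. borel) :: (nat \<Rightarrow> real) measure"
  define Z where "Z x = restrict (\<lambda>i. (if i = 0 then TD else T i) x) {0::nat}" for x
  define Y where "Y x = restrict (\<lambda>i. T i x) ?I" for x
  define cnt where "cnt z = (\<Sum>i\<in>?I. if snd z i \<le> fst z 0 then 1 else 0 :: real)" for z :: "(nat \<Rightarrow> real) \<times> (nat \<Rightarrow> real)"
  define Q where "Q z = (snd z n \<le> fst z 0 \<and> cnt z < real K)" for z :: "(nat \<Rightarrow> real) \<times> (nat \<Rightarrow> real)"
  have rvT: "T i \<in> borel_measurable M" if "i \<in> ?I" for i
    using ind that unfolding indep_vars_def by (metis (no_types, lifting) atLeastAtMost_iff le0 not_one_le_zero)
  have rvD[measurable]: "TD \<in> borel_measurable M"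
    using distributed_measurable[OF D] by simp
  have Ym[measurable]: "Y \<in> measurable M ?PI"
    unfolding Y_def by (intro measurable_restrict rvT)
  have Zm[measurable]: "Z \<in> measurable M ?P0"
    unfolding Z_def by (intro measurable_restrict) auto
  have sm[measurable]: "cnt \<in> borel_measurable (?P0 \<Otimes>\<^sub>M ?PI)"
    unfolding cnt_def[abs_def]
  proof (rule borel_measurable_sum)
    fix i assume "i \<in> ?I" then show "(\<lambda>z. if snd z i \<le> fst z 0 then 1 else 0 :: real) \<in> borel_measurable (?P0 \<Otimes>\<^sub>M ?PI)"
      by measurable
  qed
  have sm2[measurable]: "(\<lambda>v. cnt (w, v)) \<in> borel_measurable ?PI" for w :: "nat \<Rightarrow> real"
    unfolding cnt_def fst_conv snd_conv
  proof (rule borel_measurable_sum)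
    fix i assume "i \<in> ?I" then show "(\<lambda>v. if v i \<le> w 0 then 1 else 0 :: real) \<in> borel_measurable ?PI"
      by measurable
  qed
  have cm[measurable]: "Measurable.pred (?P0 \<Otimes>\<^sub>M ?PI) (\<lambda>z. cnt z < real K)"
    by (rule borel_measurable_pred_less[OF sm]) simp
  have cm2[measurable]: "Measurable.pred ?PI (\<lambda>v. cnt (w, v) < real K)" for w
    by (rule borel_measurable_pred_less[OF sm2]) simp
  have Qm[measurable]: "Measurable.pred (?P0 \<Otimes>\<^sub>M ?PI) Q"
  proof -
    have [measurable]: "(\<lambda>z. snd z n) \<in> borel_measurable (?P0 \<Otimes>\<^sub>M ?PI)"
      by (rule measurable_compose[OF measurable_snd measurable_component_singleton[OF n]])
    have [measurable]: "(\<lambda>z. fst z 0) \<in> borel_measurable (?P0 \<Otimes>\<^sub>M ?PI)"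
      by (rule measurable_compose[OF measurable_fst measurable_component_singleton]) simp
    have "Measurable.pred (?P0 \<Otimes>\<^sub>M ?PI) (\<lambda>z. snd z n \<le> fst z 0)" by measurable
    then show ?thesis unfolding Q_def[abs_def] by (rule pred_intros_logic(3)[OF _ cm])
  qed
  have Qm2[measurable]: "Measurable.pred ?PI (\<lambda>v. Q (w, v))" for w
  proof -
    have [measurable]: "(\<lambda>v. v n) \<in> borel_measurable ?PI"
      by (rule measurable_component_singleton[OF n])
    have "Measurable.pred ?PI (\<lambda>v. v n \<le> w 0)" by measurable
    then show ?thesis unfolding Q_def fst_conv snd_conv by (rule pred_intros_logic(3)[OF _ cm2])
  qed
  have indep: "indep_var ?P0 Z ?PI Y"
  proof -
    have "indep_var ?P0 (\<lambda>\<omega>. restrict (\<lambda>i. (if i = 0 then TD else T i) \<omega>) {0}) ?PI (\<lambda>\<omega>. restrict (\<lambda>i. (if i = 0 then TD else T i) \<omega>) ?I)"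
      by (rule indep_var_restrict[OF ind]) auto
    moreover have "(\<lambda>\<omega>. restrict (\<lambda>i. (if i = 0 then TD else T i) \<omega>) ?I) = Y"
      unfolding Y_def by (auto intro!: ext restrict_ext)
    ultimately show ?thesis unfolding Z_def by simp
  qed
  have Z0: "Z x 0 = TD x" for x unfolding Z_def by simp
  have Yi: "i \<in> ?I \<Longrightarrow> Y x i = T i x" for i x unfolding Y_def by simp
  have QZY: "Q (Z x, Y x) \<longleftrightarrow> T n x \<le> TD x \<and> card {i\<in>?I. T i x \<le> TD x} < K" for x
  proof -
    have "cnt (Z x, Y x) = (\<Sum>i\<in>?I. if T i x \<le> TD x then 1 else 0)"
      unfolding cnt_def by (intro sum.cong refl) (simp add: Yi Z0)
    also have "\<dots> = real (card {i\<in>?I. T i x \<le> TD x})" by (rule card_sum_real[symmetric]) simp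
    finally show ?thesis unfolding Q_def using n by (simp add: Yi Z0)
  qed
  have ZYsp: "(Z x, Y x) \<in> space (?P0 \<Otimes>\<^sub>M ?PI)" if "x \<in> space M" for x
    using measurable_space[OF measurable_Pair[OF Zm Ym] that] .
  have Ceq: "C' = (\<lambda>x. (Z x, Y x)) -` {z\<in>space (?P0 \<Otimes>\<^sub>M ?PI). Q z} \<inter> space M"
    unfolding C'_def using ZYsp QZY by auto
  show "C' \<in> sets M"
    unfolding Ceq using Qm by measurable
  let ?Qs = "{z\<in>space (?P0 \<Otimes>\<^sub>M ?PI). Q z}"
  define \<phi> where "\<phi> z = ennreal (fst z 0 ^ k) * indicator ?Qs z" for z
  have fst0[measurable]: "(\<lambda>z. fst z 0) \<in> borel_measurable (?P0 \<Otimes>\<^sub>M ?PI)"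
    by (rule measurable_compose[OF measurable_fst measurable_component_singleton]) simp
  have w0[measurable]: "(\<lambda>w. w 0) \<in> borel_measurable ?P0"
    by (rule measurable_component_singleton) simp
  have phim[measurable]: "\<phi> \<in> borel_measurable (?P0 \<Otimes>\<^sub>M ?PI)"
    unfolding \<phi>_def[abs_def] by measurable
  interpret DY: prob_space "distr M ?PI Y" by (rule prob_space_distr) measurable
  interpret DZ: prob_space "distr M ?P0 Z" by (rule prob_space_distr) measurable
  have ennind: "ennreal (a * indicator A x) = ennreal a * indicator A x" for a :: real and A and x :: 'x
    by (cases "x \<in> A") auto
  have "(\<integral>\<^sup>+x. ennreal (indicator C' x * TD x ^ k) \<partial>M) = (\<integral>\<^sup>+x. \<phi> (Z x, Y x) \<partial>M)"
  proof (rule nn_integral_cong)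
    fix x assume x: "x \<in> space M"
    have "indicator C' x = (indicator ?Qs (Z x, Y x) :: real)"
      unfolding Ceq using x by (simp add: indicator_def)
    then show "ennreal (indicator C' x * TD x ^ k) = \<phi> (Z x, Y x)"
      unfolding \<phi>_def by (simp add: Z0 mult.commute ennind)
  qed
  also have "\<dots> = (\<integral>\<^sup>+z. \<phi> z \<partial>distr M (?P0 \<Otimes>\<^sub>M ?PI) (\<lambda>x. (Z x, Y x)))"
    by (rule nn_integral_distr[symmetric]) measurable
  also have "distr M (?P0 \<Otimes>\<^sub>M ?PI) (\<lambda>x. (Z x, Y x)) = distr M ?P0 Z \<Otimes>\<^sub>M distr M ?PI Y"
    using indep unfolding indep_var_distribution_eq by simp
  also have "(\<integral>\<^sup>+z. \<phi> z \<partial>(distr M ?P0 Z \<Otimes>\<^sub>M distr M ?PI Y))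
      = (\<integral>\<^sup>+w. \<integral>\<^sup>+v. \<phi> (w, v) \<partial>distr M ?PI Y \<partial>distr M ?P0 Z)"
  proof (rule DY.nn_integral_fst[symmetric])
    have e: "measurable (distr M ?P0 Z \<Otimes>\<^sub>M distr M ?PI Y) (borel :: ennreal measure) = measurable (?P0 \<Otimes>\<^sub>M ?PI) borel"
      by (rule measurable_cong_sets[OF sets_pair_measure_cong[OF sets_distr sets_distr] refl])
    show "\<phi> \<in> borel_measurable (distr M ?P0 Z \<Otimes>\<^sub>M distr M ?PI Y)"
      unfolding e by (rule phim)
  qed
  also have "\<dots> = (\<integral>\<^sup>+w. ennreal (w 0 ^ k) * ennreal (p (w 0)) \<partial>distr M ?P0 Z)"
  proof (rule nn_integral_cong)
    fix w assume w: "w \<in> space (distr M ?P0 Z)"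
    have "(\<integral>\<^sup>+v. \<phi> (w, v) \<partial>distr M ?PI Y) = (\<integral>\<^sup>+v. ennreal (w 0 ^ k) * indicator {v\<in>space ?PI. Q (w, v)} v \<partial>distr M ?PI Y)"
      by (rule nn_integral_cong) (use w in \<open>auto simp: \<phi>_def indicator_def space_pair_measure\<close>)
    also have "\<dots> = ennreal (w 0 ^ k) * emeasure (distr M ?PI Y) {v\<in>space ?PI. Q (w, v)}"
      by (rule nn_integral_cmult_indicator) (unfold sets_distr, rule Qm2[unfolded Measurable.pred_def])
    also have "emeasure (distr M ?PI Y) {v\<in>space ?PI. Q (w, v)} = emeasure M (Y -` {v\<in>space ?PI. Q (w, v)} \<inter> space M)"
      by (rule emeasure_distr[OF Ym Qm2[unfolded Measurable.pred_def]])
    also have "Y -` {v\<in>space ?PI. Q (w, v)} \<inter> space M = {x\<in>space M. T n x \<le> w 0 \<and> card {i\<in>?I. T i x \<le> w 0} < K}"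
    proof -
      have "Q (w, Y x) \<longleftrightarrow> T n x \<le> w 0 \<and> card {i\<in>?I. T i x \<le> w 0} < K" for x
      proof -
        have "cnt (w, Y x) = (\<Sum>i\<in>?I. if T i x \<le> w 0 then 1 else 0)"
          unfolding cnt_def by (intro sum.cong refl) (simp add: Yi)
        also have "\<dots> = real (card {i\<in>?I. T i x \<le> w 0})" by (rule card_sum_real[symmetric]) simp
        finally show ?thesis unfolding Q_def using n by (simp add: Yi)
      qed
      moreover have "x \<in> space M \<Longrightarrow> Y x \<in> space ?PI" for x using measurable_space[OF Ym] by blast
      ultimately show ?thesis by auto
    qed
    also have "emeasure M {x\<in>space M. T n x \<le> w 0 \<and> card {i\<in>?I. T i x \<le> w 0} < K} = ennreal (p (w 0))"
      unfolding p by (rule emeasure_eq_measure)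
    finally show "(\<integral>\<^sup>+v. \<phi> (w, v) \<partial>distr M ?PI Y) = ennreal (w 0 ^ k) * ennreal (p (w 0))" .
  qed
  also have "\<dots> = (\<integral>\<^sup>+x. ennreal (TD x ^ k) * ennreal (p (TD x)) \<partial>M)"
    by (subst nn_integral_distr) (auto simp: Z0)
  also have "\<dots> = (\<integral>\<^sup>+t. f t * (ennreal (t ^ k) * ennreal (p t)) \<partial>lborel)"
  proof (rule distributed_nn_integral[OF D, symmetric])
    show "(\<lambda>t. ennreal (t ^ k) * ennreal (p t)) \<in> borel_measurable lborel"
      unfolding measurable_lborel2 by measurable
  qed
  also have "\<dots> = (\<integral>\<^sup>+t. f t * ennreal (t ^ k * p t) \<partial>lborel)"
    by (intro nn_integral_cong) (simp add: p ennreal_mult'')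
  finally show "(\<integral>\<^sup>+x. ennreal (indicator C' x * TD x ^ k) \<partial>M) = (\<integral>\<^sup>+t. f t * ennreal (t ^ k * p t) \<partial>lborel)" .
qed

lemma q_term:
  fixes ls ld c t :: real
  assumes "h \<le> N"
  shows "t^k * ld * exp (-ld*(t-c)) * Gc N h (exp (-ls*(t-c)))
       = (\<Sum>j<h. Bc N h j / Uc N h j * ld * (t^k * exp (- Hc ls ld N h j * (t-c))))"
  unfolding Gc_def sum_distrib_left
proof (intro sum.cong refl)
  fix j assume "j \<in> {..<h}"
  have U: "Uc N h j = real (N-h+1+j)" using assms by (simp add: Uc_def)
  have "exp (-ls*(t-c)) ^ (N-h+1+j) = exp (real (N-h+1+j) * (-ls*(t-c)))"
    by (rule exp_of_nat_mult[symmetric])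
  moreover have "exp (-ld*(t-c)) * exp (real (N-h+1+j) * (-ls*(t-c))) = exp (-ld*(t-c) + real (N-h+1+j) * (-ls*(t-c)))"
    by (rule exp_add[symmetric])
  moreover have "-ld*(t-c) + real (N-h+1+j) * (-ls*(t-c)) = - Hc ls ld N h j * (t-c)"
    unfolding Hc_def U by (simp add: algebra_simps)
  ultimately have "exp (-ld*(t-c)) * exp (-ls*(t-c)) ^ (N-h+1+j) = exp (- Hc ls ld N h j * (t-c))"
    by simp
  then show "t^k * ld * exp (-ld*(t-c)) * (Bc N h j * exp (-ls*(t-c)) ^ (N-h+1+j) / Uc N h j)
      = Bc N h j / Uc N h j * ld * (t^k * exp (- Hc ls ld N h j * (t-c)))"
    by (simp add: field_simps)
qed

lemma total_integral:
  fixes ls ld c :: real and J :: "real \<Rightarrow> real"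
  assumes J: "\<And>a. a > 0 \<Longrightarrow> ((\<lambda>t. t^k * exp (-a*(t-c))) has_integral J a) {c..}"
    and ls: "ls > 0" and ld: "ld > 0" and K: "1 \<le> K" "K \<le> N"
  shows "((\<lambda>t. t^k * ld * exp (-ld*(t-c)) * Pp N K (exp (-ls*(t-c)))) has_integral
     (1 / real N) * (real K * (\<Sum>j<K. Bc N K j / Uc N K j * ld * J (Hc ls ld N K j))
        - (\<Sum>h\<in>{1..K}. \<Sum>j<h. Bc N h j / Uc N h j * ld * J (Hc ls ld N h j)))) {c..}"
proof -
  have N: "real N > 0" using K by simp
  have Hpos: "Hc ls ld N h j > 0" if "h \<le> N" for h j
  proof -
    have "Uc N h j \<ge> 0" using that by (simp add: Uc_def)
    then show ?thesis using ls ld by (simp add: Hc_def add_nonneg_pos)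
  qed
  have trm: "((\<lambda>t. \<Sum>j<h. Bc N h j / Uc N h j * ld * (t^k * exp (- Hc ls ld N h j * (t-c))))
      has_integral (\<Sum>j<h. Bc N h j / Uc N h j * ld * J (Hc ls ld N h j))) {c..}" if "h \<le> N" for h
  proof (rule has_integral_sum)
    fix j assume "j \<in> {..<h}"
    have "((\<lambda>t. t^k * exp (- Hc ls ld N h j * (t-c))) has_integral J (Hc ls ld N h j)) {c..}"
      using J[OF Hpos[OF that]] by simp
    then show "((\<lambda>t. Bc N h j / Uc N h j * ld * (t^k * exp (- Hc ls ld N h j * (t-c))))
        has_integral Bc N h j / Uc N h j * ld * J (Hc ls ld N h j)) {c..}"
      by (rule has_integral_mult_right)
  qed simp
  have eq: "t^k * ld * exp (-ld*(t-c)) * Pp N K (exp (-ls*(t-c)))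
     = (1 / real N) * (real K * (\<Sum>j<K. Bc N K j / Uc N K j * ld * (t^k * exp (- Hc ls ld N K j * (t-c))))
        - (\<Sum>h\<in>{1..K}. \<Sum>j<h. Bc N h j / Uc N h j * ld * (t^k * exp (- Hc ls ld N h j * (t-c)))))" for t
  proof -
    let ?u = "exp (-ls*(t-c))"
    let ?w = "t^k * ld * exp (-ld*(t-c))"
    have "Pp N K ?u = (1 / real N) * (real K * Gc N K ?u - (\<Sum>h\<in>{1..K}. Gc N h ?u))"
    proof -
      have "real N * Pp N K ?u = real K * Gm N K ?u - (\<Sum>h\<in>{1..K}. Gm N h ?u)"
        by (rule Pp_eq[OF K])
      also have "\<dots> = real K * Gc N K ?u - (\<Sum>h\<in>{1..K}. Gc N h ?u)"
        using K by (simp add: Gc_eq_Gm)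
      finally show ?thesis using N by (simp add: field_simps)
    qed
    then have "?w * Pp N K ?u = ?w * ((1 / real N) * (real K * Gc N K ?u - (\<Sum>h\<in>{1..K}. Gc N h ?u)))"
      by simp
    also have "\<dots> = (1 / real N) * (real K * (?w * Gc N K ?u) - ?w * (\<Sum>h\<in>{1..K}. Gc N h ?u))"
      by (simp add: algebra_simps)
    also have "\<dots> = (1 / real N) * (real K * (?w * Gc N K ?u) - (\<Sum>h\<in>{1..K}. ?w * Gc N h ?u))"
      by (simp add: sum_distrib_left)
    also have "\<dots> = (1 / real N) * (real K * (\<Sum>j<K. Bc N K j / Uc N K j * ld * (t^k * exp (- Hc ls ld N K j * (t-c))))
        - (\<Sum>h\<in>{1..K}. \<Sum>j<h. Bc N h j / Uc N h j * ld * (t^k * exp (- Hc ls ld N h j * (t-c)))))"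
    proof -
      have qt: "?w * Gc N h ?u = (\<Sum>j<h. Bc N h j / Uc N h j * ld * (t^k * exp (- Hc ls ld N h j * (t-c))))"
        if "h \<le> N" for h using that by (rule q_term)
      have s: "(\<Sum>h\<in>{1..K}. ?w * Gc N h ?u) = (\<Sum>h\<in>{1..K}. \<Sum>j<h. Bc N h j / Uc N h j * ld * (t^k * exp (- Hc ls ld N h j * (t-c))))"
        by (rule sum.cong[OF refl], rule qt) (use K in auto)
      show ?thesis by (simp only: qt[OF K(2)] s)
    qed
    finally show ?thesis .
  qed
  show ?thesis
    unfolding eq
    by (intro has_integral_mult_right has_integral_diff has_integral_sum trm) (use K in auto)
qed

theorem proposition6:
  fixes M :: "'a measure" and C :: "'a set" and T :: "nat \<Rightarrow> 'a \<Rightarrow> real" and TD :: "'a \<Rightarrow> real"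
    and N K n :: nat and ls ld c :: real
  assumes "prob_space M"
    and "1 \<le> N" and "1 \<le> K" and "K \<le> N"
    and "ls > 0" and "ld > 0" and "c > 0"
    and "prob_space.indep_vars M (\<lambda>_. borel) (\<lambda>i. if i = 0 then TD else T i) {0..N}"
    and "\<And>i t. i \<in> {1..N} \<Longrightarrow>
           measure M {x \<in> space M. T i x \<le> t} = (if t > c then 1 - exp (- ls * (t - c)) else 0)"
    and "distributed M lborel TD (\<lambda>t. ennreal (if t > c then ld * exp (- ld * (t - c)) else 0))"
    and "n \<in> {1..N}"
    and "C = {x \<in> space M. TD x < order_stat N T K x \<and>
                 T n x \<le> min (TD x) (order_stat N T K x)}"
    and "measure M C > 0"
  shows "(cond_exp_event M TD C =
           (real K * (\<Sum>j<K. Bc N K j * ld * (c * Hc ls ld N K j + 1)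
                               / (Uc N K j * (Hc ls ld N K j)^2))
            - (\<Sum>h\<in>{1..K}. \<Sum>j<h. Bc N h j * ld * (c * Hc ls ld N h j + 1)
                               / (Uc N h j * (Hc ls ld N h j)^2)))
           / (real K * Rc ls ld N K - (\<Sum>h\<in>{1..K}. Rc ls ld N h))) \<and>
         (cond_exp_event M (\<lambda>x. (TD x)^2) C =
           (real K * (\<Sum>j<K. Bc N K j * ld * (c^2 * (Hc ls ld N K j)^2 + 2 * c * Hc ls ld N K j + 2)
                               / (Uc N K j * (Hc ls ld N K j)^3))
            - (\<Sum>h\<in>{1..K}. \<Sum>j<h. Bc N h j * ld * (c^2 * (Hc ls ld N h j)^2 + 2 * c * Hc ls ld N h j + 2)
                               / (Uc N h j * (Hc ls ld N h j)^3)))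
           / (real K * Rc ls ld N K - (\<Sum>h\<in>{1..K}. Rc ls ld N h)))"
proof -
  interpret prob_space M by fact
  let ?I = "{1..N}"
  note ind = assms(8) and Fd = assms(9) and D = assms(10) and n = assms(11) and Cdef = assms(12)
  have ls: "ls > 0" and ld: "ld > 0" and c: "c > 0" and K: "1 \<le> K" "K \<le> N" using assms by auto
  define Ft where "Ft t = (if t > c then 1 - exp (- ls * (t - c)) else 0)" for t :: real
  define p where "p t = measure M {x\<in>space M. T n x \<le> t \<and> card {i\<in>?I. T i x \<le> t} < K}" for t
  define f where "f t = ennreal (if t > c then ld * exp (- ld * (t - c)) else 0)" for t :: real
  have indT: "indep_vars (\<lambda>_. borel) T ?I"
  proof -
    have "indep_vars (\<lambda>_. borel) (\<lambda>i. if i = 0 then TD else T i) ?I"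
      by (rule indep_vars_subset[OF ind]) auto
    then show ?thesis by (rule indep_vars_cong[THEN iffD1, rotated -1]) auto
  qed
  have p_eq: "p t = Pp N K (1 - Ft t)" for t
  proof -
    have "p t = (\<Sum>m<K-1. real ((card ?I - 1) choose m) * Ft t^(m+1) * (1-Ft t)^(card ?I - 1 - m))"
      unfolding p_def
      by (rule prob_count[OF assms(1) _ n indT]) (use Fd in \<open>auto simp: Ft_def\<close>)
    then show ?thesis by (simp add: Pp_def)
  qed
  have u_eq: "1 - Ft t = exp (- ls * (t - c))" if "t \<ge> c" for t
    using that by (auto simp: Ft_def)
  have p_nonneg: "p t \<ge> 0" for t unfolding p_def by simp
  have pm: "p \<in> borel_measurable borel"
  proof -
    have "p = (\<lambda>t. Pp N K (1 - Ft t))" using p_eq by auto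
    then show ?thesis unfolding Ft_def[abs_def] Pp_def by simp
  qed
  have fD: "distributed M lborel TD f" using D unfolding f_def .
  have Ceq: "C = {x\<in>space M. T n x \<le> TD x \<and> card {i\<in>?I. T i x \<le> TD x} < K}"
    unfolding Cdef
  proof (rule Collect_cong)
    fix x
    have os: "TD x < order_stat N T K x \<longleftrightarrow> card {i\<in>?I. T i x \<le> TD x} < K"
      by (rule order_stat_gt[OF K])
    show "(x \<in> space M \<and> TD x < order_stat N T K x \<and> T n x \<le> min (TD x) (order_stat N T K x)) =
        (x \<in> space M \<and> T n x \<le> TD x \<and> card {i\<in>?I. T i x \<le> TD x} < K)"
      unfolding os[symmetric] by (auto simp: min_def)
  qed
  have FP: "C \<in> sets M" "\<And>k. (\<integral>\<^sup>+x. ennreal (indicator C x * TD x ^ k) \<partial>M) = (\<integral>\<^sup>+t. f t * ennreal (t ^ k * p t) \<partial>lborel)"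
    unfolding Ceq by (rule fubini_part[OF assms(1) ind fD n pm p_def])+
  have AEc: "AE x in M. TD x > c"
  proof -
    have "AE x in lborel. 0 < f x \<longrightarrow> c < x" by (auto simp: f_def)
    then show ?thesis using distributed_AE2[OF fD] by simp
  qed
  have Pp1: "Pp N K 1 = 0" unfolding Pp_def by simp
  define V where "V k J = (1 / real N) * (real K * (\<Sum>j<K. Bc N K j / Uc N K j * ld * J (Hc ls ld N K j))
        - (\<Sum>h\<in>{1..K}. \<Sum>j<h. Bc N h j / Uc N h j * ld * J (Hc ls ld N h j)))" for k :: nat and J :: "real \<Rightarrow> real"
  have mom: "has_bochner_integral M (\<lambda>x. indicator C x * TD x ^ k) (V k J)"
    if J: "\<And>a. a > 0 \<Longrightarrow> ((\<lambda>t. t^k * exp (-a*(t-c))) has_integral J a) {c..}" for k J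
  proof -
    let ?q = "\<lambda>t. t^k * ld * exp (-ld*(t-c)) * Pp N K (exp (-ls*(t-c)))"
    have hi: "(?q has_integral V k J) {c..}"
      unfolding V_def by (rule total_integral[OF J ls ld K])
    have qnn: "?q t \<ge> 0" if "t \<in> {c..}" for t
    proof -
      have "Pp N K (exp (-ls*(t-c))) = p t" using that by (simp add: p_eq u_eq)
      then show ?thesis using that c ld p_nonneg by simp
    qed
    have "(\<integral>\<^sup>+x. ennreal (indicator C x * TD x ^ k) \<partial>M) = (\<integral>\<^sup>+t. f t * ennreal (t ^ k * p t) \<partial>lborel)"
      by (rule FP(2))
    also have "\<dots> = (\<integral>\<^sup>+t. ennreal (indicator {c..} t * ?q t) \<partial>lborel)"
    proof (rule nn_integral_cong)
      fix t :: real
      show "f t * ennreal (t ^ k * p t) = ennreal (indicator {c..} t * ?q t)"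
      proof (cases "t > c")
        case True
        then have "p t = Pp N K (exp (-ls*(t-c)))" by (simp add: p_eq u_eq)
        moreover have "t ^ k * p t \<ge> 0" using True c p_nonneg by simp
        ultimately show ?thesis using True ld
          by (simp add: f_def ennreal_mult[symmetric] mult_ac)
      next
        case False
        then show ?thesis by (cases "t = c") (auto simp: f_def Pp1)
      qed
    qed
    also have "\<dots> = ennreal (V k J)"
      by (rule nn_integral_has_integral_lebesgue[OF qnn hi])
    finally have nn: "(\<integral>\<^sup>+x. ennreal (indicator C x * TD x ^ k) \<partial>M) = ennreal (V k J)" .
    show ?thesis
    proof (rule has_bochner_integral_nn_integral[OF _ _ _ nn])
      have [measurable]: "TD \<in> borel_measurable M" using distributed_measurable[OF fD] by simp
      show "(\<lambda>x. indicator C x * TD x ^ k) \<in> borel_measurable M" using FP(1) by measurable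
      show "AE x in M. 0 \<le> indicator C x * TD x ^ k"
        using AEc by eventually_elim (use c in \<open>auto simp: indicator_def\<close>)
      show "0 \<le> V k J" by (rule has_integral_nonneg[OF hi qnn])
    qed
  qed
  have m0: "has_bochner_integral M (\<lambda>x. indicator C x * TD x ^ 0) (V 0 (\<lambda>a. 1/a))"
    by (rule mom) (rule moment0)
  have m1: "has_bochner_integral M (\<lambda>x. indicator C x * TD x ^ 1) (V 1 (\<lambda>a. (c*a+1)/a^2))"
    by (rule mom) (rule moment1, use c in auto)
  have m2: "has_bochner_integral M (\<lambda>x. indicator C x * TD x ^ 2) (V 2 (\<lambda>a. (c^2*a^2+2*c*a+2)/a^3))"
    by (rule mom) (rule moment2)
  have Csub: "C \<inter> space M = C" using sets.sets_into_space[OF FP(1)] by auto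
  have measC: "measure M C = V 0 (\<lambda>a. 1/a)"
    using has_bochner_integral_integral_eq[OF m0] Csub by simp
  have i1: "(\<integral>x. indicator C x * TD x \<partial>M) = V 1 (\<lambda>a. (c*a+1)/a^2)"
    using has_bochner_integral_integral_eq[OF m1] by simp
  have i2: "(\<integral>x. indicator C x * (TD x)^2 \<partial>M) = V 2 (\<lambda>a. (c^2*a^2+2*c*a+2)/a^3)"
    using has_bochner_integral_integral_eq[OF m2] by simp
  have UH: "Uc N h j > 0" "Hc ls ld N h j > 0" "Hc ls ld N h j = ls * Uc N h j + ld" if "h \<le> N" for h j
  proof -
    show U: "Uc N h j > 0" using that by (simp add: Uc_def)
    show "Hc ls ld N h j = ls * Uc N h j + ld" by (simp add: Hc_def)
    then show "Hc ls ld N h j > 0" using U ls ld by (simp add: add_pos_pos)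
  qed
  have R: "Rc ls ld N h = (\<Sum>j<h. Bc N h j / Uc N h j * ld * (1 / Hc ls ld N h j))" if "h \<le> N" for h
    unfolding Rc_def
  proof (rule sum.cong[OF refl])
    fix j
    have "Uc N h j > 0" "Hc ls ld N h j > 0" "Hc ls ld N h j = ls * Uc N h j + ld" using UH[OF that] by auto
    then show "Bc N h j * (1 / Uc N h j - ls / Hc ls ld N h j) = Bc N h j / Uc N h j * ld * (1 / Hc ls ld N h j)"
      by (simp add: field_simps)
  qed
  have den: "real K * Rc ls ld N K - (\<Sum>h\<in>{1..K}. Rc ls ld N h) = real N * V 0 (\<lambda>a. 1/a)"
  proof -
    have "(\<Sum>h\<in>{1..K}. Rc ls ld N h) = (\<Sum>h\<in>{1..K}. \<Sum>j<h. Bc N h j / Uc N h j * ld * (1 / Hc ls ld N h j))"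
      by (rule sum.cong[OF refl], rule R) (use K in auto)
    then show ?thesis unfolding V_def using K by (simp add: R)
  qed
  have num1: "real K * (\<Sum>j<K. Bc N K j * ld * (c * Hc ls ld N K j + 1) / (Uc N K j * (Hc ls ld N K j)^2))
            - (\<Sum>h\<in>{1..K}. \<Sum>j<h. Bc N h j * ld * (c * Hc ls ld N h j + 1) / (Uc N h j * (Hc ls ld N h j)^2))
     = real N * V 1 (\<lambda>a. (c*a+1)/a^2)"
  proof -
    have e: "Bc N h j * ld * (c * Hc ls ld N h j + 1) / (Uc N h j * (Hc ls ld N h j)^2)
        = Bc N h j / Uc N h j * ld * ((c * Hc ls ld N h j + 1) / (Hc ls ld N h j)^2)" for h j
      by (simp add: field_simps)
    show ?thesis unfolding V_def e using K by simp
  qed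
  have num2: "real K * (\<Sum>j<K. Bc N K j * ld * (c^2 * (Hc ls ld N K j)^2 + 2 * c * Hc ls ld N K j + 2) / (Uc N K j * (Hc ls ld N K j)^3))
            - (\<Sum>h\<in>{1..K}. \<Sum>j<h. Bc N h j * ld * (c^2 * (Hc ls ld N h j)^2 + 2 * c * Hc ls ld N h j + 2) / (Uc N h j * (Hc ls ld N h j)^3))
     = real N * V 2 (\<lambda>a. (c^2*a^2+2*c*a+2)/a^3)"
  proof -
    have e: "Bc N h j * ld * (c^2 * (Hc ls ld N h j)^2 + 2 * c * Hc ls ld N h j + 2) / (Uc N h j * (Hc ls ld N h j)^3)
        = Bc N h j / Uc N h j * ld * ((c^2 * (Hc ls ld N h j)^2 + 2 * c * Hc ls ld N h j + 2) / (Hc ls ld N h j)^3)" for h j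
      by (simp add: field_simps)
    show ?thesis unfolding V_def e using K by simp
  qed
  have Npos: "real N > 0" using K by simp
  show ?thesis
    unfolding cond_exp_event_def i1 i2 measC den num1 num2 using Npos by simp
qed

end
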